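(* Let $\mathcal{L}:\mathbb{R}^p\to\mathbb{R}$ be continuously differentiable, let $\theta_0\in\mathbb{R}^p$, and let $\mathcal{B}(\theta_0)\subseteq\mathbb{R}^p$ be a non-empty set containing $\theta_0$. Let $(\theta_t)_{t\ge 0}$ be generated by gradient descent $\theta_{t+1}=\theta_t-\eta_t\nabla_\theta\mathcal{L}(\theta_t)$, and assume all iterates $\theta_t$, $t\ge1$, lie in $\mathcal{B}(\theta_0)$. Fix a step $t$ and suppose: (RSC condition) there is a non-empty set $\mathcal{N}_t$ such that (a) $\mathcal{N}_t\subseteq\mathcal{B}(\theta_0)$; (b) either (b.1) $\theta_{t+1}\in\mathcal{N}_t$ and either $\theta_t\notin\mathcal{N}_t$ or $\mathcal{L}(\theta_t)\ne\inf_{\theta\in\mathcal{N}_t}\mathcal{L}(\theta)$, or (b.2) there exists $\theta'\in\mathcal{N}_t$ with $\mathcal{L}(\theta')<\mathcal{L}(\theta_t)$; and (c) $\mathcal{L}$ satisfies $\alpha_t$-restricted strong convexity with respect to $(\mathcal{N}_t,\theta_t)$ for some $\alpha_t>0$; (Smoothness condition) $\mathcal{L}$ is $\beta$-smooth on $\mathcal{B}(\theta_0)$ for some $\beta>0$, i.e. $\mathcal{L}(\theta')\le\mathcal{L}(\theta)+\langle\theta'-\theta,\nabla_\theta\mathcal{L}(\theta)\rangle+\frac{\beta}{2}\|\theta'-\theta\|_2^2$ for all $\theta,\theta'\in\mathcal{B}(\theta_0)$. Assume $\alpha_t\le\beta$ and $\eta_t=\omega_t/\beta$ for some $\omega_t\in(0,2)$.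 If $\mathcal{L}(\theta_t)\ne\inf_{\theta\in\mathcal{B}(\theta_0)}\mathcal{L}(\theta)$, then $$0\le\gamma_t:=\frac{\inf_{\theta\in\mathcal{N}_t}\mathcal{L}(\theta)-\inf_{\theta\in\mathcal{B}(\theta_0)}\mathcal{L}(\theta)}{\mathcal{L}(\theta_t)-\inf_{\theta\in\mathcal{B}(\theta_0)}\mathcal{L}(\theta)}<1$$ and $$\mathcal{L}(\theta_{t+1})-\inf_{\theta\in\mathcal{B}(\theta_0)}\mathcal{L}(\theta)\le\Big(1-\frac{\alpha_t\omega_t(1-\gamma_t)}{\beta}(2-\omega_t)\Big)\Big(\mathcal{L}(\theta_t)-\inf_{\theta\in\mathcal{B}(\theta_0)}\mathcal{L}(\theta)\Big).$$
   Context: A function $\mathcal{L}$ satisfies $\alpha$-restricted strong convexity ($\alpha$-RSC) with respect to a tuple $(\mathcal{S},\theta)$, where $\mathcal{S}\subseteq\mathbb{R}^p$ and $\theta\in\mathbb{R}^p$ is fixed, if $\alpha>0$ and for every $\theta'\in\mathcal{S}$: $\mathcal{L}(\theta')\ge\mathcal{L}(\theta)+\langle\theta'-\theta,\nabla_\theta\mathcal{L}(\theta)\rangle+\frac{\alpha}{2}\|\theta'-\theta\|_2^2$. *)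

theory Defs
  imports "HOL-Analysis.Analysis"
begin

definition rsc :: "('a::real_inner \<Rightarrow> real) \<Rightarrow> ('a \<Rightarrow> 'a) \<Rightarrow> real \<Rightarrow> 'a set \<Rightarrow> 'a \<Rightarrow> bool" where
  "rsc L gL \<alpha> S th \<longleftrightarrow> \<alpha> > 0 \<and>
     (\<forall>th'\<in>S. L th' \<ge> L th + inner (th' - th) (gL th) + \<alpha> / 2 * (norm (th' - th))\<^sup>2)"

definition beta_smooth :: "('a::real_inner \<Rightarrow> real) \<Rightarrow> ('a \<Rightarrow> 'a) \<Rightarrow> real \<Rightarrow> 'a set \<Rightarrow> bool" where
  "beta_smooth L gL \<beta> B \<longleftrightarrow>
     (\<forall>th\<in>B. \<forall>th'\<in>B. L th' \<le> L th + inner (th' - th) (gL th) + \<beta> / 2 * (norm (th' - th))\<^sup>2)"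

end

theory Submission
  imports Defs
begin

theorem theorem1:
  fixes L :: "'p::euclidean_space \<Rightarrow> real"
    and gL :: "'p \<Rightarrow> 'p"
    and B N :: "'p set"
    and th :: "nat \<Rightarrow> 'p"
    and \<eta> :: "nat \<Rightarrow> real"
    and th0 :: 'p
    and t :: nat
    and \<alpha> \<beta> \<omega> :: real
  assumes grad: "\<And>x. GDERIV L x :> gL x"
    and grad_cont: "continuous_on UNIV gL"
    and B0: "th0 \<in> B"
    and init: "th 0 = th0"
    and gd: "\<And>n. th (Suc n) = th n - \<eta> n *\<^sub>R gL (th n)"
    and inB: "\<And>n. n \<ge> 1 \<Longrightarrow> th n \<in> B"
    and bdd: "bdd_below (L ` B)"
    and N_ne: "N \<noteq> {}"
    and N_sub: "N \<subseteq> B"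
    and N_b: "(th (Suc t) \<in> N \<and> (th t \<notin> N \<or> L (th t) \<noteq> (INF x\<in>N. L x)))
              \<or> (\<exists>th'\<in>N. L th' < L (th t))"
    and RSC: "rsc L gL \<alpha> N (th t)"
    and \<beta>_pos: "\<beta> > 0"
    and smooth: "beta_smooth L gL \<beta> B"
    and \<alpha>\<beta>: "\<alpha> \<le> \<beta>"
    and \<omega>: "0 < \<omega>" "\<omega> < 2"
    and step: "\<eta> t = \<omega> / \<beta>"
    and notopt: "L (th t) \<noteq> (INF x\<in>B. L x)"
  shows "let \<gamma> = ((INF x\<in>N. L x) - (INF x\<in>B. L x)) / (L (th t) - (INF x\<in>B. L x))
         in 0 \<le> \<gamma> \<and> \<gamma> < 1 \<and>
            L (th (Suc t)) - (INF x\<in>B. L x)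
              \<le> (1 - \<alpha> * \<omega> * (1 - \<gamma>) / \<beta> * (2 - \<omega>)) * (L (th t) - (INF x\<in>B. L x))"
proof -
  define x where "x = th t"
  define g where "g = gL x"
  define y where "y = th (Suc t)"
  define m where "m = (INF z\<in>N. L z)"
  define M where "M = (INF z\<in>B. L z)"
  define G where "G = (norm g)\<^sup>2"
  have y_eq: "y - x = - (\<omega> / \<beta>) *\<^sub>R g" using gd[of t] step unfolding x_def y_def g_def by simp
  have xB: "x \<in> B" unfolding x_def using inB B0 init by (cases t) auto
  have yB: "y \<in> B" unfolding y_def using inB by simp
  have bddN: "bdd_below (L ` N)" using bdd N_sub by (meson bdd_below_mono image_mono)
  have MLx: "M \<le> L x" unfolding M_def using cINF_lower[OF bdd xB] .
  have Mm: "M \<le> m" unfolding m_def M_def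
    by (rule cINF_greatest[OF N_ne]) (use N_sub in \<open>auto intro: cINF_lower[OF bdd]\<close>)
  have D: "L x - M > 0" using MLx notopt unfolding x_def M_def by auto
  have inner_yx: "inner (y - x) g = - (\<omega> / \<beta>) * G" unfolding y_eq G_def
    by (simp add: power2_norm_eq_inner)
  have norm_yx: "(norm (y - x))\<^sup>2 = (\<omega> / \<beta>)\<^sup>2 * G" unfolding y_eq G_def
    by (simp add: power_mult_distrib power_divide)
  have sm: "L y \<le> L x + inner (y - x) g + \<beta> / 2 * (norm (y - x))\<^sup>2"
    using smooth xB yB unfolding beta_smooth_def g_def by blast
  have c: "L x + inner (y - x) g + \<beta> / 2 * (norm (y - x))\<^sup>2 = L x - \<omega> * (2 - \<omega>) / (2 * \<beta>) * G"
    unfolding inner_yx norm_yx using \<beta>_pos by (simp add: field_simps power2_eq_square)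
  have sm2: "L y \<le> L x - \<omega> * (2 - \<omega>) / (2 * \<beta>) * G" using sm c by linarith
  have \<alpha>pos: "\<alpha> > 0" using RSC unfolding rsc_def by simp
  have low: "L z \<ge> L x - G / (2 * \<alpha>)" if "z \<in> N" for z
  proof -
    have r: "L z \<ge> L x + inner (z - x) g + \<alpha> / 2 * (norm (z - x))\<^sup>2"
      using RSC that unfolding rsc_def x_def g_def by blast
    have "0 \<le> (norm (\<alpha> *\<^sub>R (z - x) + g))\<^sup>2" by simp
    also have "\<dots> = \<alpha>\<^sup>2 * (norm (z - x))\<^sup>2 + 2 * \<alpha> * inner (z - x) g + G"
      unfolding G_def power2_norm_eq_inner
      by (simp add: inner_add_left inner_add_right inner_commute power2_eq_square algebra_simps)
    finally have "0 \<le> \<alpha>\<^sup>2 * (norm (z - x))\<^sup>2 + 2 * \<alpha> * inner (z - x) g + G" .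
    hence "- G / (2 * \<alpha>) \<le> inner (z - x) g + \<alpha> / 2 * (norm (z - x))\<^sup>2"
      using \<alpha>pos by (simp add: field_simps power2_eq_square)
    thus ?thesis using r by linarith
  qed
  have mlow: "m \<ge> L x - G / (2 * \<alpha>)" unfolding m_def
    by (rule cINF_greatest[OF N_ne]) (use low in auto)
  have mlt: "m < L x"
  proof (rule ccontr)
    assume ge: "\<not> m < L x"
    from N_b[folded x_def y_def m_def] show False
    proof
      assume h: "y \<in> N \<and> (x \<notin> N \<or> L x \<noteq> m)"
      hence "m \<le> L y" unfolding m_def using cINF_lower[OF bddN] by blast
      hence "L x \<le> L y" using ge by linarith
      hence "\<omega> * (2 - \<omega>) / (2 * \<beta>) * G \<le> 0" using sm2 by linarith
      moreover have "\<omega> * (2 - \<omega>) / (2 * \<beta>) > 0" using \<omega> \<beta>_pos by simp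
      ultimately have "G \<le> 0" by (meson mult_le_0_iff not_less)
      hence "g = 0" unfolding G_def by simp
      hence "y = x" using y_eq by simp
      hence "x \<in> N" using h by simp
      hence "m \<le> L x" unfolding m_def using cINF_lower[OF bddN] by blast
      hence "L x = m" using ge by linarith
      thus False using h \<open>x \<in> N\<close> by simp
    next
      assume "\<exists>th'\<in>N. L th' < L x"
      then obtain z where "z \<in> N" "L z < L x" by blast
      hence "m \<le> L z" unfolding m_def using cINF_lower[OF bddN] by blast
      thus False using ge \<open>L z < L x\<close> by linarith
    qed
  qed
  define \<gamma> where "\<gamma> = (m - M) / (L x - M)"
  have g0: "0 \<le> \<gamma>" unfolding \<gamma>_def using Mm D by simp
  have g1: "\<gamma> < 1" unfolding \<gamma>_def using mlt D by simp
  have key: "(1 - \<gamma>) * (L x - M) = L x - m" unfolding \<gamma>_def using D by (simp add: field_simps)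
  have G2: "G \<ge> 2 * \<alpha> * (L x - m)" using mlow \<alpha>pos by (simp add: field_simps)
  have cpos: "\<omega> * (2 - \<omega>) / (2 * \<beta>) \<ge> 0" using \<omega> \<beta>_pos by simp
  have "L y \<le> L x - \<omega> * (2 - \<omega>) / (2 * \<beta>) * (2 * \<alpha> * (L x - m))"
    using sm2 mult_left_mono[OF G2 cpos] by linarith
  also have "\<dots> = L x - \<alpha> * \<omega> * (2 - \<omega>) / \<beta> * ((1 - \<gamma>) * (L x - M))"
    unfolding key using \<beta>_pos by (simp add: field_simps)
  finally have fin: "L y - M \<le> (1 - \<alpha> * \<omega> * (1 - \<gamma>) / \<beta> * (2 - \<omega>)) * (L x - M)"
    by (simp add: algebra_simps)
  show ?thesis unfolding Let_def
    using g0 g1 fin unfolding \<gamma>_def m_def M_def x_def y_def by simp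
qed

end
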